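(* Let $q=2$ and let $C^{\otimes 2}=(\mathbb{G}_a^2,\Phi)$ be the $T$-module with \[\Phi(T)=\begin{pmatrix}T&1\\0&T\end{pmatrix}+\begin{pmatrix}0&0\\1&0\end{pmatrix}\tau.\] Set $t=T^2$ and $\Psi(t)=\Phi(T^2)$, so that $(\mathbb{G}_a^2,\Psi)$ is a $t$-module over $\mathbb{F}_2[t]$. Then the $t$-module $(\mathbb{G}_a^2,\Psi)$ has rank $2$, and its sub-$t$-module $0\times\mathbb{G}_a$ has rank $1$.
   Context: $\tau$ is the Frobenius $z\mapsto z^2$, acting coordinatewise, with $\tau M=M^{(2)}\tau$ for matrices. Explicitly $\Psi(t)=\begin{pmatrix}t&0\\0&t\end{pmatrix}+\begin{pmatrix}1&0\\ \sqrt{t}+t&1\end{pmatrix}\tau$ (here $\sqrt t=T$). A sub-$t$-module is a reduced connected algebraic subgroup stable under $\Psi(t)$. With $\mathcal{F}=\mathbb{F}_2(T)$ the field of coefficients, the rank of a $t$-module (or sub-$t$-module) $\mathcal{B}$ is the rank over $\mathcal{F}[t]$ of $\mathrm{Hom}_{\mathcal{F}}(\mathcal{B},\mathbb{G}_a)$, the $\mathbb{F}_2$-linear algebraic group homomorphisms $\mathcal{B}\to\mathbb{G}_a$ defined over $\mathcal{F}$, which is an $\mathcal{F}[t]$-module via left multiplication by $\mathcal{F}$ and $t\cdot f=f\circ\Psi(t)$. *)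

theory Defs
  imports "HOL-Library.Z2" "HOL-Library.Product_Plus" "HOL-Computational_Algebra.Polynomial" "HOL-Computational_Algebra.Fraction_Field"
begin

type_synonym F = "bit poly fract"

definition TT :: F where "TT = Fract [:0, 1:] 1"

definition tt :: F where "tt = TT ^ 2"

text \<open>Psi(t) acting on F-points of G_a^2:
  Psi(t)(x,y) = t (x,y) + [[1,0],[sqrt t + t, 1]] (x^2, y^2).\<close>
definition Psi :: "F \<times> F \<Rightarrow> F \<times> F" where
  "Psi z = (tt * fst z + (fst z) ^ 2,
            tt * snd z + (TT + tt) * (fst z) ^ 2 + (snd z) ^ 2)"

definition poly_fun2 :: "(F \<times> F \<Rightarrow> F) \<Rightarrow> bool" where
  "poly_fun2 f \<longleftrightarrow> (\<exists>(c :: nat \<Rightarrow> nat \<Rightarrow> F) N.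
      \<forall>x y. f (x, y) = (\<Sum>i\<le>N. \<Sum>j\<le>N. c i j * x ^ i * y ^ j))"

text \<open>Hom_F(B, G_a): F_2-linear (= additive, as char = 2) algebraic group homomorphisms
  B -> G_a defined over F, for an algebraic subgroup B of G_a^2, viewed as functions on B
  (only values on B matter).\<close>
definition Hom_Ga :: "(F \<times> F) set \<Rightarrow> (F \<times> F \<Rightarrow> F) set" where
  "Hom_Ga B = {f. poly_fun2 f \<and> (\<forall>u\<in>B. \<forall>v\<in>B. f (u + v) = f u + f v)}"

text \<open>F[t]-action on homomorphisms: F by left multiplication, t by f \<mapsto> f \<circ> psi.\<close>
definition tact :: "('a \<Rightarrow> 'a) \<Rightarrow> F poly \<Rightarrow> ('a \<Rightarrow> F) \<Rightarrow> 'a \<Rightarrow> F" where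
  "tact psi p f = (\<lambda>z. \<Sum>k\<le>degree p. coeff p k * f ((psi ^^ k) z))"

definition tindep :: "'a set \<Rightarrow> ('a \<Rightarrow> 'a) \<Rightarrow> ('a \<Rightarrow> F) set \<Rightarrow> bool" where
  "tindep B psi S \<longleftrightarrow> (\<forall>c :: ('a \<Rightarrow> F) \<Rightarrow> F poly.
      (\<forall>z\<in>B. (\<Sum>s\<in>S. tact psi (c s) s z) = 0) \<longrightarrow> (\<forall>s\<in>S. c s = 0))"

definition has_trank :: "'a set \<Rightarrow> ('a \<Rightarrow> 'a) \<Rightarrow> ('a \<Rightarrow> F) set \<Rightarrow> nat \<Rightarrow> bool" where
  "has_trank B psi M r \<longleftrightarrow>
     (\<exists>S. S \<subseteq> M \<and> finite S \<and> card S = r \<and> tindep B psi S) \<and>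
     (\<forall>S. S \<subseteq> M \<and> finite S \<and> tindep B psi S \<longrightarrow> card S \<le> r)"

end

theory Submission
  imports Defs "HOL-Library.Function_Algebras"
begin


lemma bit_two: "(2::bit poly) = 0"
  by (metis bit_2_eq_0 of_nat_numeral of_nat_poly pCons_0_0 )
lemma two_F: "(2::F) = 0"
proof -
  have "(2::F) = Fract 1 1 + Fract 1 1" by (simp add: One_fract_def[symmetric])
  also have "\<dots> = Fract 2 1" by (simp add: add_fract)
  also have "\<dots> = 0" by (simp add: bit_two Zero_fract_def)
  finally show ?thesis .
qed
lemma fract_pow: "Fract (a::'a::idom) 1 ^ n = Fract (a^n) 1"
  by (induction n) (auto simp: mult_fract One_fract_def)
lemma inf_F: "infinite (UNIV :: F set)"
proof
  assume "finite (UNIV::F set)"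
  then have "finite (range (\<lambda>n::nat. TT ^ n))" by (rule finite_subset[rotated]) auto
  moreover have "inj (\<lambda>n::nat. TT ^ n)"
  proof (rule injI)
    fix m n assume "TT ^ m = TT ^ n"
    then have "Fract (monom 1 m) 1 = Fract (monom (1::bit) n) 1"
      by (simp add: TT_def monom_altdef fract_pow)
    then have "monom (1::bit) m = monom 1 n" by (simp add: eq_fract)
    then show "m = n" by (metis coeff_monom one_neq_zero)
  qed
  ultimately show False using finite_imageD by auto
qed


lemma add_self_F: "(x::F) + x = 0"
  by (metis mult_2 mult_zero_left two_F)
lemma frob: "((x::F) + y)^2 = x^2 + y^2"
  by (simp add: power2_sum two_F)
lemma frob_pow: "((x::F)+y)^(2^i) = x^(2^i)+y^(2^i)"
proof (induction i)
  case (Suc i)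
  have "((x::F)+y)^(2^Suc i) = (((x::F)+y)^(2^i))^2" by (simp add: power_mult[symmetric] mult.commute)
  also have "\<dots> = (x^(2^i))^2 + (y^(2^i))^2" by (simp add: Suc frob)
  finally show ?case by (simp add: power_mult[symmetric] mult.commute)
qed simp
lemma of_nat_F: "(of_nat n :: F) = (if even n then 0 else 1)"
  by (induction n) (auto simp: add_self_F)

lemma poly_zero_inf:
  fixes p :: "'a::idom poly"
  assumes "infinite A" "\<forall>x\<in>A. poly p x = 0" shows "p = 0"
proof (rule ccontr)
  assume "p \<noteq> 0"
  then have "finite {x. poly p x = 0}" by (rule poly_roots_finite)
  moreover have "A \<subseteq> {x. poly p x = 0}" using assms by auto
  ultimately show False using assms(1) finite_subset by blast
qed

lemma L1:
  fixes p :: "F poly"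
  assumes inf: "infinite A" and add: "\<forall>u\<in>A. \<forall>v\<in>A. poly p (u+v) = poly p u + poly p v"
  shows "poly p (u+v) = poly p u + poly p v"
proof -
  have h1: "poly p (x+b) = poly p x + poly p b" if b: "b \<in> A" for x b
  proof -
    define q where "q = pcompose p [:b,1:] - p - [:poly p b:]"
    have "\<forall>x\<in>A. poly q x = 0" using add b by (auto simp: q_def poly_pcompose add.commute)
    then have "q = 0" using poly_zero_inf inf by blast
    then have "poly q x = 0" by simp
    then show ?thesis by (simp add: q_def poly_pcompose add.commute diff_eq_eq)
  qed
  define r where "r = pcompose p [:u,1:] - [:poly p u:] - p"
  have "\<forall>b\<in>A. poly r b = 0" using h1 by (auto simp: r_def poly_pcompose add.commute)
  then have "r = 0" using poly_zero_inf inf by blast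
  then have "poly r v = 0" by simp
  then show ?thesis by (simp add: r_def poly_pcompose add.commute diff_eq_eq)
qed


definition scl :: "F \<Rightarrow> ('b \<Rightarrow> F) \<Rightarrow> 'b \<Rightarrow> F" where
  "scl c f = (\<lambda>z. c * f z)"

interpretation fvs: vector_space "scl :: F \<Rightarrow> ('b \<Rightarrow> F) \<Rightarrow> 'b \<Rightarrow> F"
  by unfold_locales (auto simp: scl_def fun_eq_iff algebra_simps)

lemma sum_fun_app: "(\<Sum>v\<in>T. f v) (z::'b) = (\<Sum>v\<in>T. f v z)"
  by (induction T rule: infinite_finite_induct) auto

lemma fam_dep:
  fixes g :: "'i \<Rightarrow> 'b \<Rightarrow> F"
  assumes I: "finite I" and G: "finite G" and cd: "card G < card I"
    and sp: "\<forall>i\<in>I. g i \<in> fvs.span G"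
  shows "\<exists>a. (\<forall>z. (\<Sum>i\<in>I. a i * g i z) = 0) \<and> (\<exists>i\<in>I. a i \<noteq> 0)"
proof (cases "inj_on g I")
  case True
  define T where "T = g ` I"
  have cT: "card T = card I" using True by (simp add: T_def card_image)
  have fT: "finite T" using I by (simp add: T_def)
  have "T \<subseteq> fvs.span G" using sp by (auto simp: T_def)
  then have "fvs.dependent T"
    using fvs.independent_span_bound[OF G] cT cd by fastforce
  then obtain u where u: "\<exists>v\<in>T. u v \<noteq> 0" "(\<Sum>v\<in>T. scl (u v) v) = 0"
    using fvs.dependent_finite[OF fT] by blast
  show ?thesis
  proof (intro exI conjI allI)
    fix z
    have "(\<Sum>i\<in>I. u (g i) * g i z) = (\<Sum>v\<in>T. u v * v z)"
      unfolding T_def by (rule sum.reindex[OF True, symmetric, unfolded comp_def])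
    also have "\<dots> = (\<Sum>v\<in>T. scl (u v) v) z" by (simp add: sum_fun_app scl_def)
    also have "\<dots> = 0" using u(2) by simp
    finally show "(\<Sum>i\<in>I. u (g i) * g i z) = 0" .
  next
    show "\<exists>i\<in>I. u (g i) \<noteq> 0" using u(1) by (auto simp: T_def)
  qed
next
  case False
  then obtain i j where ij: "i \<in> I" "j \<in> I" "i \<noteq> j" "g i = g j"
    by (auto simp: inj_on_def)
  define a where "a k = (if k = i then 1 else if k = j then -1 else (0::F))" for k
  show ?thesis
  proof (intro exI conjI allI)
    fix z
    have "(\<Sum>k\<in>I. a k * g k z) = (\<Sum>k\<in>I. (if k = i then g i z else 0)) - (\<Sum>k\<in>I. (if k = j then g j z else 0))"
    proof -
      have "a k * g k z = (if k = i then g i z else 0) - (if k = j then g j z else 0)" for k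
        using ij(3) by (simp add: a_def)
      then show ?thesis by (simp add: sum_subtractf[symmetric])
    qed
    also have "\<dots> = 0" using ij I by simp
    finally show "(\<Sum>k\<in>I. a k * g k z) = 0" .
  next
    show "\<exists>k\<in>I. a k \<noteq> 0" using ij by (auto simp: a_def)
  qed
qed


lemma sq_inj_F: "inj (\<lambda>x::F. x^2)"
proof (rule injI)
  fix x y :: F assume "x^2 = y^2"
  then have "(x+y)^2 = 0" by (simp add: frob add_self_F)
  then have "x + y = 0" by simp
  then show "x = y" by (metis add_self_F add_right_imp_eq)
qed

lemma inf_sq: "infinite (range (\<lambda>x::F. x^2))"
  using inf_F sq_inj_F finite_imageD by blast

lemma coeff_H:
  fixes p :: "F poly"
  shows "coeff (\<Sum>m\<le>degree p. monom (coeff p (2*m)) (2*m)) n = (if even n then coeff p n else 0)"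
proof -
  have "coeff (\<Sum>m\<le>degree p. monom (coeff p (2*m)) (2*m)) n
     = (\<Sum>m\<le>degree p. (if 2*m = n then coeff p (2*m) else 0))"
    by (simp add: coeff_sum coeff_monom)
  also have "\<dots> = (if even n then coeff p n else 0)"
  proof (cases "even n")
    case True
    then obtain k where k: "n = 2*k" by blast
    have "(\<Sum>m\<le>degree p. (if 2*m = n then coeff p (2*m) else 0))
        = (\<Sum>m\<le>degree p. (if m = k then coeff p (2*m) else 0))"
      by (rule sum.cong) (auto simp: k)
    also have "\<dots> = (if k \<le> degree p then coeff p n else 0)"
      by (simp add: k)
    also have "\<dots> = coeff p n"
      using k by (auto intro: coeff_eq_0)
    finally show ?thesis using True by simp
  next
    case False
    then show ?thesis by (auto intro!: sum.neutral)
  qed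
  finally show ?thesis .
qed

lemma coeff_h:
  fixes p :: "F poly"
  shows "coeff (\<Sum>m\<le>degree p. monom (coeff p (2*m)) m) i = (if i \<le> degree p then coeff p (2*i) else 0)"
  by (simp add: coeff_sum coeff_monom)

lemma addchar:
  fixes p :: "F poly"
  assumes "\<forall>u v. poly p (u+v) = poly p u + poly p v"
  shows "\<exists>m a. \<forall>x. poly p x = (\<Sum>i\<le>m. a i * x^(2^i))"
  using assms
proof (induction "degree p" arbitrary: p rule: less_induct)
  case less
  note add = less.prems[rule_format]
  have p0: "poly p 0 = 0" using add[of 0 0] by (metis add.right_neutral add_left_cancel)
  show ?case
  proof (cases "degree p = 0")
    case True
    then have pc0: "p = [:coeff p 0:]" using degree_0_id by metis
    have "poly p x = 0" for x using p0 by (subst pc0) (simp add: poly_0_coeff_0)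
    then have "\<forall>x. poly p x = 0" by blast
    then show ?thesis by (intro exI[of _ 0] exI[of _ "\<lambda>_. 0"]) simp
  next
    case False
    have pc: "pcompose p [:b,1:] = p + [:poly p b:]" for b
    proof -
      have "pcompose p [:b,1:] - (p + [:poly p b:]) = 0"
      proof (rule poly_zero_inf[OF inf_F], intro ballI)
        fix x :: F
        show "poly (pcompose p [:b,1:] - (p + [:poly p b:])) x = 0"
          using add[of b x] by (simp add: poly_pcompose)
      qed
      then show ?thesis by simp
    qed
    have dpc: "pcompose (pderiv p) [:b,1:] = pderiv p" for b
    proof -
      have "pderiv (pcompose p [:b,1:]) = pderiv (p + [:poly p b:])" by (simp add: pc)
      then show ?thesis by (simp add: pderiv_pcompose pderiv_add pderiv_pCons)
    qed
    have dp: "poly (pderiv p) b = poly (pderiv p) 0" for b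
      using arg_cong[OF dpc[of b], of "\<lambda>q. poly q 0"] by (simp add: poly_pcompose)
    have dconst: "pderiv p = [:poly (pderiv p) 0:]"
    proof -
      have "pderiv p - [:poly (pderiv p) 0:] = 0"
      proof (rule poly_zero_inf[OF inf_F], intro ballI)
        fix x :: F
        show "poly (pderiv p - [:poly (pderiv p) 0:]) x = 0" using dp[of x] by simp
      qed
      then show ?thesis by simp
    qed
    have codd: "coeff p n = 0" if o: "odd n" "n \<ge> 3" for n
    proof -
      obtain k where k: "n = Suc k" "k \<ge> 1" using o by (cases n) auto
      have "coeff (pderiv p) k = 0" using k by (subst dconst) (cases k, auto)
      then show ?thesis using o k by (simp add: coeff_pderiv of_nat_F)
    qed
    have c0: "coeff p 0 = 0" using p0 by (simp add: poly_0_coeff_0)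
    define d where "d = degree p"
    define h where "h = (\<Sum>m\<le>d. monom (coeff p (2*m)) m)"
    define H where "H = (\<Sum>m\<le>d. monom (coeff p (2*m)) (2*m))"
    have pH: "p = monom (coeff p 1) 1 + H"
    proof (rule poly_eqI)
      fix n
      have cH: "coeff H n = (if even n then coeff p n else 0)" unfolding H_def d_def by (rule coeff_H)
      show "coeff p n = coeff (monom (coeff p 1) 1 + H) n"
      proof (cases "even n")
        case True
        then have "n \<noteq> 1" by auto
        then show ?thesis using True cH by (simp add: coeff_monom)
      next
        case odd: False
        show ?thesis
        proof (cases "n = 1")
          case True then show ?thesis using cH by (simp add: coeff_monom)
        next
          case False
          then have "n \<ge> 3" using odd by presburger
          then show ?thesis using odd cH codd[of n] False by (simp add: coeff_monom)
        qed
      qed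
    qed
    have hH: "poly H x = poly h (x^2)" for x
      by (simp add: H_def h_def poly_sum poly_monom power_mult)
    have pform: "poly p x = coeff p 1 * x + poly h (x^2)" for x
      by (subst pH) (simp add: hH poly_monom)
    have degh: "degree h < degree p"
    proof -
      have "degree h \<le> d div 2"
      proof (rule degree_le, intro allI impI)
        fix i assume "d div 2 < i"
        then have "degree p < 2*i" using d_def by linarith
        then have "coeff p (2*i) = 0" by (rule coeff_eq_0)
        then show "coeff h i = 0" unfolding h_def d_def by (simp add: coeff_h)
      qed
      then show ?thesis using False d_def by linarith
    qed
    have hsq: "\<forall>u\<in>range (\<lambda>x::F. x^2). \<forall>v\<in>range (\<lambda>x::F. x^2). poly h (u+v) = poly h u + poly h v"
    proof (intro ballI)
      fix u v assume "u \<in> range (\<lambda>x::F. x^2)" "v \<in> range (\<lambda>x::F. x^2)"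
      then obtain x y where xy: "u = x^2" "v = y^2" by auto
      have "poly h (u + v) = poly h ((x+y)^2)" by (simp add: xy frob)
      also have "\<dots> = poly p (x+y) - coeff p 1 * (x+y)" using pform[of "x+y"] by simp
      also have "\<dots> = (poly p x - coeff p 1 * x) + (poly p y - coeff p 1 * y)"
        using add[of x y] by (simp add: algebra_simps)
      also have "\<dots> = poly h u + poly h v" using pform[of x] pform[of y] xy by simp
      finally show "poly h (u + v) = poly h u + poly h v" .
    qed
    have hadd: "\<forall>u v. poly h (u+v) = poly h u + poly h v"
      using L1[OF inf_sq hsq] by blast
    obtain m a where ma: "\<forall>u. poly h u = (\<Sum>i\<le>m. a i * u^(2^i))"
      using less.hyps[OF degh hadd] by blast
    show ?thesis
    proof (intro exI allI)
      fix x
      have "poly p x = coeff p 1 * x + (\<Sum>i\<le>m. a i * x^(2^Suc i))"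
        using pform[of x] ma by (simp add: power_mult[symmetric] mult.commute)
      also have "\<dots> = (\<Sum>i\<le>Suc m. (case_nat (coeff p 1) a) i * x^(2^i))"
        by (subst sum.atMost_Suc_shift) simp
      finally show "poly p x = (\<Sum>i\<le>Suc m. (case_nat (coeff p 1) a) i * x^(2^i))" .
    qed
  qed
qed


definition phi :: "F \<Rightarrow> F" where "phi x = tt * x + x^2"

lemma Psi_fst: "fst ((Psi ^^ k) z) = (phi ^^ k) (fst z)"
  by (induction k) (auto simp: Psi_def phi_def)

lemma Psi_zero: "(Psi ^^ k) (0, y) = (0, (phi ^^ k) y)"
  by (induction k) (auto simp: Psi_def phi_def)

definition Q :: "nat \<Rightarrow> F poly" where
  "Q k = ((\<lambda>q. pcompose [:0, tt, 1:] q) ^^ k) [:0, 1:]"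

lemma Q_Suc: "Q (Suc k) = pcompose [:0, tt, 1:] (Q k)"
  by (simp add: Q_def)

lemma poly_Q: "poly (Q k) x = (phi ^^ k) x"
  by (induction k) (auto simp: Q_Suc Q_def poly_pcompose phi_def power2_eq_square algebra_simps)

lemma degree_Q: "degree (Q k) = 2^k \<and> lead_coeff (Q k) = 1"
proof (induction k)
  case 0 then show ?case by (simp add: Q_def)
next
  case (Suc k)
  have d2: "degree [:0, tt, 1::F:] = 2" by simp
  have dq: "degree (Q k) = 2^k" using Suc by blast
  have lq: "lead_coeff (Q k) = 1" using Suc by blast
  have "degree (Q (Suc k)) = 2 * 2^k" using dq by (simp add: Q_Suc degree_pcompose)
  moreover have "lead_coeff (Q (Suc k)) = 1"
    unfolding Q_Suc using lead_coeff_comp[of "Q k" "[:0, tt, 1:]"] dq lq by simp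
  ultimately show ?case by simp
qed

lemma indep1:
  fixes c :: "F poly"
  assumes H: "\<forall>x. (\<Sum>k\<le>degree c. coeff c k * (phi ^^ k) x) = 0"
  shows "c = 0"
proof (rule ccontr)
  assume c0: "c \<noteq> 0"
  define d where "d = degree c"
  define R where "R = (\<Sum>k\<le>d. smult (coeff c k) (Q k))"
  have "\<forall>x\<in>UNIV. poly R x = 0" using H by (simp add: R_def d_def poly_sum poly_Q)
  then have R0: "R = 0" by (rule poly_zero_inf[OF inf_F])
  have "coeff R (2^d) = (\<Sum>k\<le>d. coeff c k * coeff (Q k) (2^d))"
    by (simp add: R_def coeff_sum)
  also have "\<dots> = (\<Sum>k\<le>d. (if k = d then coeff c d else 0))"
  proof (rule sum.cong[OF refl])
    fix k assume "k \<in> {..d}"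
    then have kd: "k \<le> d" by simp
    show "coeff c k * coeff (Q k) (2^d) = (if k = d then coeff c d else 0)"
    proof (cases "k = d")
      case True
      have "lead_coeff (Q d) = 1" "degree (Q d) = 2^d" using degree_Q[of d] by auto
      then show ?thesis using True by simp
    next
      case False
      then have "k < d" using kd by simp
      then have "degree (Q k) < 2^d" using degree_Q[of k] by simp
      then show ?thesis using False by (simp add: coeff_eq_0)
    qed
  qed
  also have "\<dots> = coeff c d" by simp
  finally have "coeff c d = 0" using R0 by simp
  then show False using c0 d_def by simp
qed

lemma tact_Psi: "tact Psi c f z = (\<Sum>k\<le>degree c. coeff c k * f ((Psi ^^ k) z))"
  by (simp add: tact_def)

lemma tact_zero: "tact psi 0 f z = 0"
  by (simp add: tact_def)

lemma fst_pf: "poly_fun2 fst"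
  unfolding poly_fun2_def
proof (intro exI allI)
  fix x y :: F
  show "fst (x, y) = (\<Sum>i\<le>1. \<Sum>j\<le>1. (\<lambda>i j. if i = 1 \<and> j = 0 then 1 else 0) i j * x ^ i * y ^ j)"
    by (simp add: atMost_Suc)
qed

lemma snd_pf: "poly_fun2 snd"
  unfolding poly_fun2_def
proof (intro exI allI)
  fix x y :: F
  show "snd (x, y) = (\<Sum>i\<le>1. \<Sum>j\<le>1. (\<lambda>i j. if i = 0 \<and> j = 1 then 1 else 0) i j * x ^ i * y ^ j)"
    by (simp add: atMost_Suc)
qed

lemma fst_hom: "fst \<in> Hom_Ga UNIV"
  unfolding Hom_Ga_def using fst_pf by simp

lemma snd_hom: "snd \<in> Hom_Ga S"
  unfolding Hom_Ga_def using snd_pf by simp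

lemma fst_snd: "(fst :: F \<times> F \<Rightarrow> F) \<noteq> snd"
proof
  assume "(fst :: F \<times> F \<Rightarrow> F) = snd"
  then have "fst (1::F, 0::F) = snd (1::F, 0::F)" by simp
  then show False by simp
qed

lemma tindep_U: "tindep UNIV Psi {fst, snd}"
  unfolding tindep_def
proof (intro allI impI)
  fix c :: "(F \<times> F \<Rightarrow> F) \<Rightarrow> F poly"
  assume H0: "\<forall>z\<in>UNIV. (\<Sum>s\<in>{fst, snd}. tact Psi (c s) s z) = 0"
  have H: "tact Psi (c fst) fst z + tact Psi (c snd) snd z = 0" for z
  proof -
    have "(\<Sum>s\<in>{fst, snd}. tact Psi (c s) s z) = 0" using H0 by blast
    then show ?thesis using fst_snd by simp
  qed
  have "\<forall>y. (\<Sum>k\<le>degree (c snd). coeff (c snd) k * (phi ^^ k) y) = 0"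
  proof
    fix y
    show "(\<Sum>k\<le>degree (c snd). coeff (c snd) k * (phi ^^ k) y) = 0"
      using H[of "(0, y)"] by (simp add: tact_Psi Psi_zero)
  qed
  then have cs: "c snd = 0" by (rule indep1)
  have "\<forall>x. (\<Sum>k\<le>degree (c fst). coeff (c fst) k * (phi ^^ k) x) = 0"
  proof
    fix x
    show "(\<Sum>k\<le>degree (c fst). coeff (c fst) k * (phi ^^ k) x) = 0"
      using H[of "(x, 0)"] by (simp add: cs tact_zero tact_Psi Psi_fst)
  qed
  then have "c fst = 0" by (rule indep1)
  then show "\<forall>s\<in>{fst, snd}. c s = 0" using cs by simp
qed

lemma tindep_B: "tindep ({0} \<times> UNIV) Psi {snd}"
  unfolding tindep_def
proof (intro allI impI)
  fix c :: "(F \<times> F \<Rightarrow> F) \<Rightarrow> F poly"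
  assume H: "\<forall>z\<in>{0} \<times> UNIV. (\<Sum>s\<in>{snd}. tact Psi (c s) s z) = 0"
  have "\<forall>y. (\<Sum>k\<le>degree (c snd). coeff (c snd) k * (phi ^^ k) y) = 0"
  proof
    fix y
    show "(\<Sum>k\<le>degree (c snd). coeff (c snd) k * (phi ^^ k) y) = 0"
      using H[rule_format, of "(0, y)"] by (simp add: tact_Psi Psi_zero)
  qed
  then show "\<forall>s\<in>{snd}. c s = 0" using indep1 by simp
qed

lemma Psi_B: "Psi ` ({0} \<times> UNIV) \<subseteq> {0} \<times> UNIV"
  by (auto simp: Psi_def)



lemma span_comp:
  fixes G :: "('a \<Rightarrow> F) set" and G' :: "('b \<Rightarrow> F) set" and ph :: "'b \<Rightarrow> 'a"
  assumes gen: "\<forall>h\<in>G. h \<circ> ph \<in> fvs.span G'" and f: "f \<in> fvs.span G"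
  shows "f \<circ> ph \<in> fvs.span G'"
  using f
proof (induction rule: fvs.span_induct_alt)
  case base
  have "(0 :: 'a \<Rightarrow> F) \<circ> ph = 0" by (simp add: fun_eq_iff)
  then show ?case by (simp only:) (rule fvs.span_zero)
next
  case (step c x y)
  have "(scl c x + y) \<circ> ph = scl c (x \<circ> ph) + (y \<circ> ph)" by (simp add: fun_eq_iff scl_def)
  moreover have "scl c (x \<circ> ph) \<in> fvs.span G'" using step gen fvs.span_scale by blast
  moreover have "y \<circ> ph \<in> fvs.span G'" using step by blast
  ultimately show ?case using fvs.span_add by metis
qed

lemma tact_trunc:
  assumes "degree p \<le> K"
  shows "(\<Sum>k\<le>degree p. coeff p k * h k) = (\<Sum>k\<le>K. coeff p k * (h k :: F))"
  by (rule sum.mono_neutral_left) (use assms in \<open>auto simp: coeff_eq_0\<close>)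

lemma upper_generic:
  fixes S :: "('a \<Rightarrow> F) set" and E :: "('a \<Rightarrow> F) \<Rightarrow> 'b \<Rightarrow> F" and G :: "nat \<Rightarrow> ('b \<Rightarrow> F) set"
    and \<iota> :: "'a \<Rightarrow> 'b"
  assumes fS: "finite S" and ind: "tindep B psi S"
    and Gfin: "\<And>m. finite (G m)" and Gcard: "\<And>m. card (G m) \<le> r * (m+1)"
    and Gmono: "\<And>m m'. m \<le> m' \<Longrightarrow> G m \<subseteq> G m'"
    and spanS: "\<And>s. s \<in> S \<Longrightarrow> \<exists>m. \<forall>k. E (s \<circ> (psi ^^ k)) \<in> fvs.span (G (m+k))"
    and Eval: "\<And>f z. z \<in> B \<Longrightarrow> E f (\<iota> z) = f z"
  shows "card S \<le> r"
proof (rule ccontr)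
  assume "\<not> card S \<le> r"
  then have cS: "card S \<ge> r + 1" by simp
  then have Sne: "S \<noteq> {}" by auto
  obtain ms where ms: "\<And>s. s \<in> S \<Longrightarrow> \<forall>k. E (s \<circ> (psi ^^ k)) \<in> fvs.span (G (ms s + k))"
    using spanS by metis
  define M where "M = Max (ms ` S)"
  define K where "K = r * M"
  define I where "I = S \<times> {..K}"
  define g where "g = (\<lambda>(s, k). E (s \<circ> (psi ^^ k)))"
  have fI: "finite I" using fS by (simp add: I_def)
  have cI: "card I = card S * (K + 1)" by (simp add: I_def card_cartesian_product)
  have "card (G (M + K)) \<le> r * (M + K + 1)" by (rule Gcard)
  also have "\<dots> < (r + 1) * (K + 1)" by (simp add: K_def algebra_simps)
  also have "\<dots> \<le> card S * (K + 1)" using cS by (rule mult_le_mono1)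
  also have "\<dots> = card I" using cI by simp
  finally have cG: "card (G (M + K)) < card I" .
  have sp: "\<forall>i\<in>I. g i \<in> fvs.span (G (M + K))"
  proof
    fix i assume "i \<in> I"
    then obtain s k where i: "i = (s, k)" "s \<in> S" "k \<le> K" by (auto simp: I_def)
    have "ms s \<le> M" using i fS by (simp add: M_def)
    then have "G (ms s + k) \<subseteq> G (M + K)" using i by (intro Gmono) simp
    then show "g i \<in> fvs.span (G (M + K))"
    proof -
      have gi: "g i = E (s \<circ> (psi ^^ k))" using i by (simp add: g_def)
      have "E (s \<circ> (psi ^^ k)) \<in> fvs.span (G (ms s + k))" using ms[OF i(2)] by blast
      then have "E (s \<circ> (psi ^^ k)) \<in> fvs.span (G (M + K))"
        by (rule subsetD[OF fvs.span_mono[OF \<open>G (ms s + k) \<subseteq> G (M + K)\<close>]])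
      then show ?thesis by (simp only: gi)
    qed
  qed
  obtain a where a0: "\<forall>z. (\<Sum>i\<in>I. a i * g i z) = 0" and a1: "\<exists>i\<in>I. a i \<noteq> 0"
    using fam_dep[OF fI Gfin cG sp] by blast
  define c where "c s = (\<Sum>k\<le>K. monom (a (s, k)) k)" for s
  have cc: "coeff (c s) n = (if n \<le> K then a (s, n) else 0)" for s n
    by (simp add: c_def coeff_sum coeff_monom)
  have dc: "degree (c s) \<le> K" for s
    by (rule degree_le) (simp add: cc)
  have "\<forall>z\<in>B. (\<Sum>s\<in>S. tact psi (c s) s z) = 0"
  proof
    fix z assume z: "z \<in> B"
    have "(\<Sum>s\<in>S. tact psi (c s) s z) = (\<Sum>s\<in>S. \<Sum>k\<le>K. a (s, k) * g (s, k) (\<iota> z))"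
    proof (rule sum.cong[OF refl])
      fix s assume "s \<in> S"
      have "tact psi (c s) s z = (\<Sum>k\<le>K. coeff (c s) k * s ((psi ^^ k) z))"
        unfolding tact_def by (rule tact_trunc[OF dc])
      also have "\<dots> = (\<Sum>k\<le>K. a (s, k) * g (s, k) (\<iota> z))"
        by (rule sum.cong[OF refl]) (simp add: cc g_def Eval[OF z])
      finally show "tact psi (c s) s z = (\<Sum>k\<le>K. a (s, k) * g (s, k) (\<iota> z))" .
    qed
    also have "\<dots> = (\<Sum>i\<in>I. a i * g i (\<iota> z))"
      unfolding I_def by (simp add: sum.cartesian_product case_prod_beta')
    also have "\<dots> = 0" using a0 by blast
    finally show "(\<Sum>s\<in>S. tact psi (c s) s z) = 0" .
  qed
  then have cz: "\<forall>s\<in>S. c s = 0" using ind[unfolded tindep_def, rule_format, of c] by blast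
  have "\<forall>i\<in>I. a i = 0"
  proof
    fix i assume "i \<in> I"
    then obtain s k where i: "i = (s, k)" "s \<in> S" "k \<le> K" by (auto simp: I_def)
    have "a (s, k) = coeff (c s) k" using i(3) by (simp add: cc)
    also have "\<dots> = 0" using cz i(2) by simp
    finally show "a i = 0" using i(1) by simp
  qed
  then show False using a1 by blast
qed



definition GU :: "nat \<Rightarrow> (F \<times> F \<Rightarrow> F) set" where
  "GU m = (\<lambda>i z. fst z ^ 2^i) ` {..m} \<union> (\<lambda>i z. snd z ^ 2^i) ` {..m}"

definition GB :: "nat \<Rightarrow> (F \<Rightarrow> F) set" where
  "GB m = (\<lambda>i y. y ^ 2^i) ` {..m}"

lemma GU_fin: "finite (GU m)" by (simp add: GU_def)
lemma GB_fin: "finite (GB m)" by (simp add: GB_def)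

lemma GU_card: "card (GU m) \<le> 2 * (m + 1)"
proof -
  have "card (GU m) \<le> card ((\<lambda>i (z::F\<times>F). fst z ^ 2^i) ` {..m}) + card ((\<lambda>i (z::F\<times>F). snd z ^ 2^i) ` {..m})"
    unfolding GU_def by (rule card_Un_le)
  also have "\<dots> \<le> card {..m} + card {..m}"
    by (intro add_mono card_image_le) auto
  finally show ?thesis by simp
qed

lemma GB_card: "card (GB m) \<le> 1 * (m + 1)"
proof -
  have "card (GB m) \<le> card {..m}" unfolding GB_def by (intro card_image_le) auto
  then show ?thesis by simp
qed

lemma GU_mono: "m \<le> m' \<Longrightarrow> GU m \<subseteq> GU m'"
  by (auto simp: GU_def)
lemma GB_mono: "m \<le> m' \<Longrightarrow> GB m \<subseteq> GB m'"
  by (auto simp: GB_def)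

lemma GB_mem: "i \<le> m \<Longrightarrow> (\<lambda>y::F. y ^ 2^i) \<in> GB m"
  unfolding GB_def by (rule image_eqI[where x=i]) auto
lemma GU_memX: "i \<le> m \<Longrightarrow> (\<lambda>z::F\<times>F. fst z ^ 2^i) \<in> GU m"
  unfolding GU_def by (rule UnI1, rule image_eqI[where x=i]) auto
lemma GU_memY: "i \<le> m \<Longrightarrow> (\<lambda>z::F\<times>F. snd z ^ 2^i) \<in> GU m"
  unfolding GU_def by (rule UnI2, rule image_eqI[where x=i]) auto

lemma pow_lin: "((a::F) * x + x^2)^(2^i) = a^(2^i) * x^(2^i) + x^(2^Suc i)"
  by (simp add: frob_pow power_mult_distrib power_mult[symmetric] mult.commute)

lemma GU_step: "\<forall>h\<in>GU m. h \<circ> Psi \<in> fvs.span (GU (Suc m))"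
proof
  fix h assume "h \<in> GU m"
  then consider (X) i where "i \<le> m" "h = (\<lambda>z. fst z ^ 2^i)" | (Y) i where "i \<le> m" "h = (\<lambda>z. snd z ^ 2^i)"
    by (auto simp: GU_def)
  then show "h \<circ> Psi \<in> fvs.span (GU (Suc m))"
  proof cases
    case X
    have "h \<circ> Psi = scl (tt^(2^i)) (\<lambda>z. fst z ^ 2^i) + (\<lambda>z. fst z ^ 2^Suc i)"
      by (simp add: X fun_eq_iff scl_def Psi_def pow_lin)
    moreover have "(\<lambda>z::F\<times>F. fst z ^ 2^i) \<in> GU (Suc m)" "(\<lambda>z::F\<times>F. fst z ^ 2^Suc i) \<in> GU (Suc m)"
      using X GU_memX[of i "Suc m"] GU_memX[of "Suc i" "Suc m"] by auto
    ultimately show ?thesis by (metis fvs.span_add fvs.span_scale fvs.span_base)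
  next
    case Y
    have "h \<circ> Psi = scl (tt^(2^i)) (\<lambda>z. snd z ^ 2^i) + scl ((TT+tt)^(2^i)) (\<lambda>z. fst z ^ 2^Suc i)
        + (\<lambda>z. snd z ^ 2^Suc i)"
      by (simp add: Y fun_eq_iff scl_def Psi_def frob_pow power_mult_distrib power_mult[symmetric] mult.commute)
    moreover have "(\<lambda>z::F\<times>F. snd z ^ 2^i) \<in> GU (Suc m)" "(\<lambda>z::F\<times>F. fst z ^ 2^Suc i) \<in> GU (Suc m)"
      "(\<lambda>z::F\<times>F. snd z ^ 2^Suc i) \<in> GU (Suc m)"
      using Y GU_memY[of i "Suc m"] GU_memX[of "Suc i" "Suc m"] GU_memY[of "Suc i" "Suc m"] by auto
    ultimately show ?thesis by (metis fvs.span_add fvs.span_scale fvs.span_base)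
  qed
qed

lemma GB_step: "\<forall>h\<in>GB m. h \<circ> phi \<in> fvs.span (GB (Suc m))"
proof
  fix h assume "h \<in> GB m"
  then obtain i where X: "i \<le> m" "h = (\<lambda>y. y ^ 2^i)" by (auto simp: GB_def)
  have "h \<circ> phi = scl (tt^(2^i)) (\<lambda>y. y ^ 2^i) + (\<lambda>y. y ^ 2^Suc i)"
    by (simp add: X fun_eq_iff scl_def phi_def pow_lin)
  moreover have "(\<lambda>y::F. y ^ 2^i) \<in> GB (Suc m)" "(\<lambda>y::F. y ^ 2^Suc i) \<in> GB (Suc m)"
    using X GB_mem[of i "Suc m"] GB_mem[of "Suc i" "Suc m"] by auto
  ultimately show "h \<circ> phi \<in> fvs.span (GB (Suc m))" by (metis fvs.span_add fvs.span_scale fvs.span_base)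
qed

lemma iter_span:
  fixes G :: "nat \<Rightarrow> ('a \<Rightarrow> F) set"
  assumes st: "\<And>m. \<forall>h\<in>G m. h \<circ> ph \<in> fvs.span (G (Suc m))"
  shows "f \<in> fvs.span (G m) \<Longrightarrow> f \<circ> (ph ^^ k) \<in> fvs.span (G (m + k))"
proof (induction k arbitrary: f m)
  case 0 then show ?case by simp
next
  case (Suc k)
  have "f \<circ> ph \<in> fvs.span (G (Suc m))" by (rule span_comp[OF st Suc.prems])
  then have "(f \<circ> ph) \<circ> (ph ^^ k) \<in> fvs.span (G (Suc m + k))" by (rule Suc.IH)
  moreover have "f \<circ> (ph ^^ Suc k) = (f \<circ> ph) \<circ> (ph ^^ k)" by (simp add: o_assoc)
  ultimately show ?case by (metis add_Suc add_Suc_right)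
qed

lemma sum_span:
  fixes X :: "nat \<Rightarrow> 'a \<Rightarrow> F"
  assumes "\<And>i. i \<le> m \<Longrightarrow> X i \<in> G"
  shows "(\<lambda>z. \<Sum>i\<le>m. a i * X i z) \<in> fvs.span G"
proof -
  have "(\<lambda>z. \<Sum>i\<le>m. a i * X i z) = (\<Sum>i\<le>m. scl (a i) (X i))"
    by (simp add: fun_eq_iff sum_fun_app scl_def)
  also have "\<dots> \<in> fvs.span G"
    by (intro fvs.span_sum fvs.span_scale fvs.span_base assms) simp
  finally show ?thesis .
qed

lemma pf_x0:
  fixes c :: "nat \<Rightarrow> nat \<Rightarrow> F"
  assumes "\<forall>x y. f (x, y) = (\<Sum>i\<le>N. \<Sum>j\<le>N. c i j * x ^ i * y ^ j)"
  shows "f (x, 0) = poly (\<Sum>i\<le>N. monom (c i 0) i) x"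
proof -
  have "f (x, 0) = (\<Sum>i\<le>N. \<Sum>j\<le>N. c i j * x ^ i * (0::F) ^ j)" using assms by blast
  also have "\<dots> = (\<Sum>i\<le>N. c i 0 * x ^ i)"
  proof (rule sum.cong[OF refl])
    fix i
    have "(\<Sum>j\<le>N. c i j * x ^ i * (0::F) ^ j) = (\<Sum>j\<le>N. (if j = 0 then c i 0 * x ^ i else 0))"
      by (rule sum.cong[OF refl]) (simp add: power_0_left)
    also have "\<dots> = c i 0 * x ^ i" by simp
    finally show "(\<Sum>j\<le>N. c i j * x ^ i * (0::F) ^ j) = c i 0 * x ^ i" .
  qed
  finally show ?thesis by (simp add: poly_sum poly_monom)
qed

lemma pf_0y:
  fixes c :: "nat \<Rightarrow> nat \<Rightarrow> F"
  assumes "\<forall>x y. f (x, y) = (\<Sum>i\<le>N. \<Sum>j\<le>N. c i j * x ^ i * y ^ j)"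
  shows "f (0, y) = poly (\<Sum>j\<le>N. monom (c 0 j) j) y"
proof -
  have "f (0, y) = (\<Sum>i\<le>N. \<Sum>j\<le>N. c i j * (0::F) ^ i * y ^ j)" using assms by blast
  also have "\<dots> = (\<Sum>i\<le>N. (if i = 0 then (\<Sum>j\<le>N. c 0 j * y ^ j) else 0))"
    by (rule sum.cong[OF refl]) (simp add: power_0_left)
  also have "\<dots> = (\<Sum>j\<le>N. c 0 j * y ^ j)" by simp
  finally show ?thesis by (simp add: poly_sum poly_monom)
qed

lemma hom_B:
  assumes "f \<in> Hom_Ga ({0} \<times> UNIV)"
  shows "\<exists>m. (\<lambda>y. f (0, y)) \<in> fvs.span (GB m)"
proof -
  obtain c N where cN: "\<forall>x y. f (x, y) = (\<Sum>i\<le>N. \<Sum>j\<le>N. c i j * x ^ i * y ^ j)"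
    using assms by (auto simp: Hom_Ga_def poly_fun2_def)
  define p where "p = (\<Sum>j\<le>N. monom (c 0 j) j)"
  have fp: "f (0, y) = poly p y" for y using pf_0y[OF cN] by (simp add: p_def)
  have "\<forall>u v. poly p (u + v) = poly p u + poly p v"
  proof (intro allI)
    fix u v :: F
    have "f ((0, u) + (0, v)) = f (0, u) + f (0, v)" using assms by (auto simp: Hom_Ga_def)
    then show "poly p (u + v) = poly p u + poly p v" by (simp add: fp[symmetric])
  qed
  then obtain m a where ma: "\<forall>x. poly p x = (\<Sum>i\<le>m. a i * x^(2^i))" using addchar by blast
  have "(\<lambda>y. f (0, y)) = (\<lambda>y. \<Sum>i\<le>m. a i * (\<lambda>i y. y ^ 2^i) i y)" using ma fp by simp
  also have "\<dots> \<in> fvs.span (GB m)" by (rule sum_span) (auto simp: GB_def)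
  finally show ?thesis by blast
qed

lemma hom_U:
  assumes "f \<in> Hom_Ga UNIV"
  shows "\<exists>m. f \<in> fvs.span (GU m)"
proof -
  obtain c N where cN: "\<forall>x y. f (x, y) = (\<Sum>i\<le>N. \<Sum>j\<le>N. c i j * x ^ i * y ^ j)"
    using assms by (auto simp: Hom_Ga_def poly_fun2_def)
  have fadd: "f (u + v) = f u + f v" for u v using assms unfolding Hom_Ga_def by blast
  define p where "p = (\<Sum>i\<le>N. monom (c i 0) i)"
  define q where "q = (\<Sum>j\<le>N. monom (c 0 j) j)"
  have fp: "f (x, 0) = poly p x" for x using pf_x0[OF cN] by (simp add: p_def)
  have fq: "f (0, y) = poly q y" for y using pf_0y[OF cN] by (simp add: q_def)
  have "\<forall>u v. poly p (u + v) = poly p u + poly p v"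
  proof (intro allI)
    fix u v :: F
    have "f ((u, 0) + (v, 0)) = f (u, 0) + f (v, 0)" by (rule fadd)
    then show "poly p (u + v) = poly p u + poly p v" by (simp add: fp[symmetric])
  qed
  then obtain m1 a where ma: "\<forall>x. poly p x = (\<Sum>i\<le>m1. a i * x^(2^i))" using addchar by blast
  have "\<forall>u v. poly q (u + v) = poly q u + poly q v"
  proof (intro allI)
    fix u v :: F
    have "f ((0, u) + (0, v)) = f (0, u) + f (0, v)" by (rule fadd)
    then show "poly q (u + v) = poly q u + poly q v" by (simp add: fq[symmetric])
  qed
  then obtain m2 b where mb: "\<forall>x. poly q x = (\<Sum>i\<le>m2. b i * x^(2^i))" using addchar by blast
  define M where "M = max m1 m2"
  have "f = (\<lambda>z. \<Sum>i\<le>m1. a i * (\<lambda>i z. fst z ^ 2^i) i z) + (\<lambda>z. \<Sum>i\<le>m2. b i * (\<lambda>i z. snd z ^ 2^i) i z)"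
  proof (rule ext)
    fix z :: "F \<times> F"
    obtain x y where z: "z = (x, y)" by (cases z)
    have "f z = f ((x, 0) + (0, y))" by (simp add: z)
    also have "\<dots> = f (x, 0) + f (0, y)" by (rule fadd)
    finally show "f z = ((\<lambda>z. \<Sum>i\<le>m1. a i * (\<lambda>i z. fst z ^ 2^i) i z) + (\<lambda>z. \<Sum>i\<le>m2. b i * (\<lambda>i z. snd z ^ 2^i) i z)) z"
      using ma mb fp fq z by simp
  qed
  also have "\<dots> \<in> fvs.span (GU M)"
    by (intro fvs.span_add sum_span) (auto simp: GU_def M_def)
  finally show ?thesis by blast
qed



theorem proposition6:
  shows "has_trank UNIV Psi (Hom_Ga UNIV) 2
     \<and> Psi ` ({0} \<times> UNIV) \<subseteq> {0} \<times> UNIV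
     \<and> has_trank ({0} \<times> UNIV) Psi (Hom_Ga ({0} \<times> UNIV)) 1"
proof (intro conjI)
  show "Psi ` ({0} \<times> UNIV) \<subseteq> {0} \<times> UNIV" by (rule Psi_B)
next
  show "has_trank UNIV Psi (Hom_Ga UNIV) 2"
    unfolding has_trank_def
  proof (intro conjI allI impI)
    show "\<exists>S. S \<subseteq> Hom_Ga UNIV \<and> finite S \<and> card S = 2 \<and> tindep UNIV Psi S"
      using fst_hom snd_hom fst_snd tindep_U by (intro exI[of _ "{fst, snd}"]) auto
  next
    fix S assume S: "S \<subseteq> Hom_Ga UNIV \<and> finite S \<and> tindep UNIV Psi S"
    show "card S \<le> 2"
    proof (rule upper_generic[where E="\<lambda>f. f" and G=GU and \<iota>="\<lambda>z. z"])
      show "finite S" using S by blast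
      show "tindep UNIV Psi S" using S by blast
      show "finite (GU m)" for m by (rule GU_fin)
      show "card (GU m) \<le> 2 * (m + 1)" for m by (rule GU_card)
      show "m \<le> m' \<Longrightarrow> GU m \<subseteq> GU m'" for m m' by (rule GU_mono)
      show "f z = f z" for f :: "F \<times> F \<Rightarrow> F" and z by simp
    next
      fix s assume "s \<in> S"
      then have "s \<in> Hom_Ga UNIV" using S by blast
      then obtain m where m: "s \<in> fvs.span (GU m)" using hom_U by blast
      show "\<exists>m. \<forall>k. s \<circ> (Psi ^^ k) \<in> fvs.span (GU (m + k))"
        using iter_span[OF GU_step m] by blast
    qed
  qed
next
  show "has_trank ({0} \<times> UNIV) Psi (Hom_Ga ({0} \<times> UNIV)) 1"
    unfolding has_trank_def
  proof (intro conjI allI impI)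
    show "\<exists>S. S \<subseteq> Hom_Ga ({0} \<times> UNIV) \<and> finite S \<and> card S = 1 \<and> tindep ({0} \<times> UNIV) Psi S"
      using snd_hom tindep_B by (intro exI[of _ "{snd}"]) auto
  next
    fix S assume S: "S \<subseteq> Hom_Ga ({0} \<times> UNIV) \<and> finite S \<and> tindep ({0} \<times> UNIV) Psi S"
    show "card S \<le> 1"
    proof (rule upper_generic[where E="\<lambda>f y. f (0, y)" and G=GB and \<iota>="snd"])
      show "finite S" using S by blast
      show "tindep ({0} \<times> UNIV) Psi S" using S by blast
      show "finite (GB m)" for m by (rule GB_fin)
      show "card (GB m) \<le> 1 * (m + 1)" for m by (rule GB_card)
      show "m \<le> m' \<Longrightarrow> GB m \<subseteq> GB m'" for m m' by (rule GB_mono)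
      show "z \<in> {0} \<times> UNIV \<Longrightarrow> f (0, snd z) = f z" for f :: "F \<times> F \<Rightarrow> F" and z by auto
    next
      fix s assume "s \<in> S"
      then have "s \<in> Hom_Ga ({0} \<times> UNIV)" using S by blast
      then obtain m where m: "(\<lambda>y. s (0, y)) \<in> fvs.span (GB m)" using hom_B by blast
      have "(\<lambda>y. (s \<circ> (Psi ^^ k)) (0, y)) = (\<lambda>y. s (0, y)) \<circ> (phi ^^ k)" for k
        by (simp add: fun_eq_iff Psi_zero)
      then show "\<exists>m. \<forall>k. (\<lambda>y. (s \<circ> (Psi ^^ k)) (0, y)) \<in> fvs.span (GB (m + k))"
        using iter_span[OF GB_step m] by metis
    qed
  qed
qed


end
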